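(* Let $\nu$ be an antinorm on $\mathbb{R}^n$ and $U_\nu=\{\xi\in\mathbb{R}^n:\nu(\xi)\ge1\}$. Then (1) $U_\nu$ is a nonempty closed convex set; (2) $\lambda U_\nu\subset U_\nu$ for every $\lambda\ge1$; (3) $0\notin U_\nu$. Conversely, if $U\subset\mathbb{R}^n$ satisfies (1)–(3), then $\nu_U=\operatorname{cl}\mathring\nu_U$, where $\mathring\nu_U(\xi)=\sup\{\lambda>0:\xi\in\lambda U\}$ (with $\sup\varnothing=-\infty$), is an antinorm. Moreover, the maps $\nu\mapsto U_\nu$ and $U\mapsto\nu_U$ are mutually inverse: $\nu_{U_\nu}=\nu$ and $U_{\nu_U}=U$.
   Context: An antinorm on $\mathbb{R}^n$ is a function $\nu:\mathbb{R}^n\to\mathbb{R}\cup\{-\infty\}$ such that: $\nu$ is concave and closed (its hypograph is closed, i.e. $\nu$ is upper semicontinuous); $\nu(\lambda\xi)=\lambda\nu(\xi)$ for all $\lambda\ge0$, $\xi\in\mathbb{R}^n$; $\operatorname{dom}\nu=\{\xi:\nu(\xi)\neq-\infty\}\neq\varnothing$ and $\nu(\xi)>0$ for every $\xi$ in the relative interior of $\operatorname{dom}\nu$. For a concave function $g$, $\operatorname{cl}g$ denotes its closure, $(\operatorname{cl}g)(\xi)=\limsup_{\eta\to\xi}g(\eta)$. *)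

theory Defs
  imports "HOL-Analysis.Analysis" "HOL-Library.Extended_Real"
begin

text \<open>Functions with values in \<open>\<real> \<union> {-\<infinity>}\<close> are modelled as \<open>ereal\<close>-valued
  functions that never take the value \<open>\<infinity>\<close>.\<close>

definition hypo :: "('a::real_vector \<Rightarrow> ereal) \<Rightarrow> ('a \<times> real) set" where
  "hypo f = {(x, t). ereal t \<le> f x}"

definition edom :: "('a \<Rightarrow> ereal) \<Rightarrow> 'a set" where
  "edom f = {x. f x \<noteq> -\<infinity>}"

text \<open>Closure of a concave function: \<open>(cl g)(x) = limsup_{y\<rightarrow>x} g(y)\<close>
  (upper semicontinuous hull, the limsup including the point itself).\<close>
definition ecl :: "('a::metric_space \<Rightarrow> ereal) \<Rightarrow> 'a \<Rightarrow> ereal" where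
  "ecl g x = (INF e\<in>{e::real. e > 0}. SUP y\<in>ball x e. g y)"

definition antinorm :: "('a::euclidean_space \<Rightarrow> ereal) \<Rightarrow> bool" where
  "antinorm \<nu> \<longleftrightarrow>
     (\<forall>x. \<nu> x \<noteq> \<infinity>) \<and>
     convex (hypo \<nu>) \<and> closed (hypo \<nu>) \<and>
     (\<forall>l x. l \<ge> 0 \<longrightarrow> \<nu> (l *\<^sub>R x) = ereal l * \<nu> x) \<and>
     edom \<nu> \<noteq> {} \<and>
     (\<forall>x\<in>rel_interior (edom \<nu>). \<nu> x > 0)"

definition U_of :: "('a \<Rightarrow> ereal) \<Rightarrow> 'a set" where
  "U_of \<nu> = {x. \<nu> x \<ge> 1}"

definition nu_ring :: "'a::real_vector set \<Rightarrow> 'a \<Rightarrow> ereal" where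
  "nu_ring U x = Sup {ereal l | l. l > 0 \<and> x \<in> (\<lambda>u. l *\<^sub>R u) ` U}"

definition nu_of :: "'a::real_normed_vector set \<Rightarrow> 'a \<Rightarrow> ereal" where
  "nu_of U = ecl (nu_ring U)"

end

theory Submission
  imports Defs
begin

lemma dist_pair_le: "dist (a::'a::metric_space, b::real) (c, d) \<le> dist a c + dist b d"
  unfolding dist_Pair_Pair by (rule sqrt_sum_squares_le_sum) auto

lemma hypo_ecl:
  fixes g :: "'a::real_normed_vector \<Rightarrow> ereal"
  shows "hypo (ecl g) = closure (hypo g)"
proof (rule set_eqI, clarify)
  fix x t
  have "(x, t) \<in> hypo (ecl g) \<longleftrightarrow> (\<forall>e>0. ereal t \<le> (SUP y\<in>ball x e. g y))"
    by (simp add: hypo_def ecl_def le_INF_iff)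
  also have "\<dots> \<longleftrightarrow> (x, t) \<in> closure (hypo g)"
  proof
    assume H: "\<forall>e>0. ereal t \<le> (SUP y\<in>ball x e. g y)"
    show "(x, t) \<in> closure (hypo g)"
      unfolding closure_approachable
    proof (intro allI impI)
      fix e :: real assume e: "e > 0"
      have "ereal (t - e/2) < ereal t" using e by simp
      also have "\<dots> \<le> (SUP y\<in>ball x (e/2). g y)" using H e by simp
      finally obtain y where y: "y \<in> ball x (e/2)" "ereal (t - e/2) < g y"
        by (auto simp: less_SUP_iff)
      have "(y, t - e/2) \<in> hypo g" using y by (simp add: hypo_def)
      moreover have "dist (y, t - e/2) (x, t) < e"
      proof -
        have "dist (y, t - e/2) (x, t) \<le> dist y x + dist (t - e/2) t" by (rule dist_pair_le)
        also have "\<dots> < e" using y e by (simp add: dist_commute dist_real_def)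
        finally show ?thesis .
      qed
      ultimately show "\<exists>y\<in>hypo g. dist y (x, t) < e" by blast
    qed
  next
    assume C: "(x, t) \<in> closure (hypo g)"
    show "\<forall>e>0. ereal t \<le> (SUP y\<in>ball x e. g y)"
    proof (intro allI impI)
      fix e :: real assume e: "e > 0"
      show "ereal t \<le> (SUP y\<in>ball x e. g y)"
      proof (rule ereal_le_epsilon2)
        fix d :: real assume d: "d > 0"
        obtain p where p: "p \<in> hypo g" "dist p (x, t) < min e d"
          using C e d unfolding closure_approachable by (metis min_less_iff_conj)
        obtain y s where ps: "p = (y, s)" by force
        have gy: "ereal s \<le> g y" using p ps by (simp add: hypo_def)
        have "dist y x \<le> dist p (x, t)" using ps dist_fst_le[of p "(x,t)"] by simp
        hence yb: "y \<in> ball x e" using p by (simp add: dist_commute)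
        have "dist s t \<le> dist p (x, t)" using ps dist_snd_le[of p "(x,t)"] by simp
        hence "t \<le> s + d" using p by (auto simp: dist_real_def abs_le_iff)
        hence "ereal t \<le> ereal s + ereal d" by simp
        also have "\<dots> \<le> g y + ereal d" using gy by (rule add_right_mono)
        also have "\<dots> \<le> (SUP y\<in>ball x e. g y) + ereal d"
          using yb by (intro add_right_mono SUP_upper)
        finally show "ereal t \<le> (SUP y\<in>ball x e. g y) + ereal d" .
      qed
    qed
  qed
  finally show "(x, t) \<in> hypo (ecl g) \<longleftrightarrow> (x, t) \<in> closure (hypo g)" .
qed

lemma ereal_eq_by_hypo:
  assumes "\<And>t. ereal t \<le> a \<longleftrightarrow> ereal t \<le> (b::ereal)"
  shows "a = b"
proof (rule ccontr)
  assume "a \<noteq> b"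
  hence "a < b \<or> b < a" by auto
  thus False
  proof
    assume "a < b" then obtain z where "a < ereal z" "ereal z < b" using ereal_dense2 by blast
    thus False using assms[of z] by auto
  next
    assume "b < a" then obtain z where "b < ereal z" "ereal z < a" using ereal_dense2 by blast
    thus False using assms[of z] by auto
  qed
qed

lemma fun_eq_by_hypo:
  assumes "hypo f = hypo g" shows "f = g"
proof
  fix x show "f x = g x"
    using assms by (intro ereal_eq_by_hypo) (auto simp: hypo_def set_eq_iff)
qed


lemma ereal_one_eq [simp]: "ereal 1 = 1" by (simp add: one_ereal_def)
lemma ereal_zero_eq [simp]: "ereal 0 = 0" by (simp add: zero_ereal_def)

lemma hypo_mem [simp]: "(x, t) \<in> hypo f \<longleftrightarrow> ereal t \<le> f x"
  by (simp add: hypo_def)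

lemma edom_eq_fst_hypo:
  assumes "\<forall>x. f x \<noteq> \<infinity>" shows "edom f = fst ` hypo f"
proof (rule set_eqI)
  fix x
  show "x \<in> edom f \<longleftrightarrow> x \<in> fst ` hypo f"
  proof
    assume "x \<in> edom f"
    then obtain r where "f x = ereal r" using assms by (cases "f x") (auto simp: edom_def)
    hence "(x, r) \<in> hypo f" by simp
    thus "x \<in> fst ` hypo f" by (rule rev_image_eqI) simp
  next
    assume "x \<in> fst ` hypo f"
    then obtain t where "ereal t \<le> f x" by force
    thus "x \<in> edom f" by (auto simp: edom_def)
  qed
qed

lemma mem_scaled_iff:
  fixes U :: "'a::real_vector set"
  assumes "l \<noteq> 0"
  shows "x \<in> (\<lambda>u. l *\<^sub>R u) ` U \<longleftrightarrow> inverse l *\<^sub>R x \<in> U"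
proof
  assume "x \<in> (\<lambda>u. l *\<^sub>R u) ` U"
  then obtain u where "u \<in> U" "x = l *\<^sub>R u" by blast
  thus "inverse l *\<^sub>R x \<in> U" using assms by simp
next
  assume "inverse l *\<^sub>R x \<in> U"
  moreover have "x = l *\<^sub>R (inverse l *\<^sub>R x)" using assms by simp
  ultimately show "x \<in> (\<lambda>u. l *\<^sub>R u) ` U" by blast
qed

lemma antinorm_zero:
  assumes "antinorm \<nu>" shows "\<nu> 0 = 0"
proof -
  have "\<nu> ((0::real) *\<^sub>R 0) = ereal 0 * \<nu> 0" using assms unfolding antinorm_def by blast
  thus ?thesis by (simp add: zero_ereal_def[symmetric])
qed

lemma antinorm_relint:
  assumes "antinorm \<nu>"
  shows "convex (edom \<nu>)" "rel_interior (edom \<nu>) \<noteq> {}"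
proof -
  have fin: "\<forall>x. \<nu> x \<noteq> \<infinity>" and cv: "convex (hypo \<nu>)" and ne: "edom \<nu> \<noteq> {}"
    using assms unfolding antinorm_def by auto
  show c: "convex (edom \<nu>)" unfolding edom_eq_fst_hypo[OF fin]
    by (rule convex_linear_image[OF linear_fst cv])
  show "rel_interior (edom \<nu>) \<noteq> {}" using rel_interior_eq_empty[OF c] ne by simp
qed

lemma part1:
  assumes A: "antinorm \<nu>"
  shows "U_of \<nu> \<noteq> {} \<and> closed (U_of \<nu>) \<and> convex (U_of \<nu>) \<and>
        (\<forall>l\<ge>1. (\<lambda>u. l *\<^sub>R u) ` U_of \<nu> \<subseteq> U_of \<nu>) \<and> 0 \<notin> U_of \<nu>"
proof (intro conjI allI impI)
  have fin: "\<forall>x. \<nu> x \<noteq> \<infinity>" and cv: "convex (hypo \<nu>)" and cl: "closed (hypo \<nu>)"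
    and hom: "\<forall>l x. l \<ge> 0 \<longrightarrow> \<nu> (l *\<^sub>R x) = ereal l * \<nu> x"
    and pos: "\<forall>x\<in>rel_interior (edom \<nu>). \<nu> x > 0"
    using A unfolding antinorm_def by auto
  obtain z where z: "z \<in> rel_interior (edom \<nu>)" using antinorm_relint[OF A] by blast
  have "\<nu> z > 0" using pos z by blast
  then obtain c where c: "\<nu> z = ereal c" "c > 0" using fin by (cases "\<nu> z") auto
  have "\<nu> (inverse c *\<^sub>R z) = ereal (inverse c) * ereal c" using hom c by simp
  also have "\<dots> = 1" using c by simp
  finally show "U_of \<nu> \<noteq> {}" unfolding U_of_def by (metis (mono_tags) empty_iff mem_Collect_eq order_refl)
  have "U_of \<nu> = (\<lambda>x. (x, 1)) -` hypo \<nu>" by (auto simp: U_of_def one_ereal_def[symmetric])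
  thus "closed (U_of \<nu>)" using cl by (auto intro!: continuous_closed_vimage continuous_intros)
  show "convex (U_of \<nu>)" unfolding convex_def
  proof (intro ballI allI impI)
    fix x y u v assume xy: "x \<in> U_of \<nu>" "y \<in> U_of \<nu>" and uv: "0 \<le> (u::real)" "0 \<le> v" "u + v = 1"
    have "u *\<^sub>R (x, 1::real) + v *\<^sub>R (y, 1) \<in> hypo \<nu>"
      using xy uv by (intro convexD[OF cv]) (auto simp: U_of_def)
    hence "(u *\<^sub>R x + v *\<^sub>R y, 1) \<in> hypo \<nu>" using uv by simp
    thus "u *\<^sub>R x + v *\<^sub>R y \<in> U_of \<nu>" by (simp add: U_of_def)
  qed
  fix l :: real assume l: "l \<ge> 1"
  show "(\<lambda>u. l *\<^sub>R u) ` U_of \<nu> \<subseteq> U_of \<nu>"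
  proof
    fix x assume "x \<in> (\<lambda>u. l *\<^sub>R u) ` U_of \<nu>"
    then obtain u where u: "\<nu> u \<ge> 1" "x = l *\<^sub>R u" by (auto simp: U_of_def)
    have "\<nu> x = ereal l * \<nu> u" using hom l u by simp
    also have "ereal l * \<nu> u \<ge> ereal l * 1" using u l by (intro ereal_mult_left_mono) auto
    finally have "ereal l \<le> \<nu> x" by simp
    moreover have "1 \<le> ereal l" using l by simp
    ultimately show "x \<in> U_of \<nu>" unfolding U_of_def by (blast intro: order_trans)
  qed
next
  show "0 \<notin> U_of \<nu>" using antinorm_zero[OF A] by (simp add: U_of_def)
qed


lemma ereal_inv_mult_ge1:
  assumes "l > 0" "a \<noteq> \<infinity>"
  shows "1 \<le> ereal (inverse l) * a \<longleftrightarrow> ereal l \<le> a"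
  using assms by (cases a) (auto simp: field_simps)

lemma part3:
  fixes \<nu> :: "'a::euclidean_space \<Rightarrow> ereal"
  assumes A: "antinorm \<nu>"
  shows "nu_of (U_of \<nu>) = \<nu>"
proof -
  have fin: "\<forall>x. \<nu> x \<noteq> \<infinity>" and cv: "convex (hypo \<nu>)" and cl: "closed (hypo \<nu>)"
    and hom: "\<forall>l x. l \<ge> 0 \<longrightarrow> \<nu> (l *\<^sub>R x) = ereal l * \<nu> x"
    and pos: "\<forall>x\<in>rel_interior (edom \<nu>). \<nu> x > 0"
    using A unfolding antinorm_def by auto
  define g where "g = nu_ring (U_of \<nu>)"
  have gx: "g x = (if \<nu> x > 0 then \<nu> x else -\<infinity>)" for x
  proof -
    have S: "{ereal l | l. l > 0 \<and> x \<in> (\<lambda>u. l *\<^sub>R u) ` U_of \<nu>} = {ereal l | l. l > 0 \<and> ereal l \<le> \<nu> x}"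
    proof -
      have "l > 0 \<Longrightarrow> x \<in> (\<lambda>u. l *\<^sub>R u) ` U_of \<nu> \<longleftrightarrow> ereal l \<le> \<nu> x" for l
        using hom fin by (simp add: mem_scaled_iff U_of_def ereal_inv_mult_ge1)
      thus ?thesis by blast
    qed
    show ?thesis
    proof (cases "\<nu> x > 0")
      case True
      then obtain r where r: "\<nu> x = ereal r" "r > 0" using fin by (cases "\<nu> x") auto
      have "Sup {ereal l | l. l > 0 \<and> ereal l \<le> \<nu> x} = ereal r"
        by (rule antisym) (auto intro!: Sup_least Sup_upper simp: r)
      thus ?thesis unfolding g_def nu_ring_def S using r by simp
    next
      case False
      have E: "{ereal l | l. l > 0 \<and> ereal l \<le> \<nu> x} = {}" using False
        by (auto, metis ereal_less(2) not_le order.trans less_imp_le)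
      show ?thesis unfolding g_def nu_ring_def S E using False by (simp add: bot_ereal_def)
    qed
  qed
  have Hg: "hypo g = {p. ereal (snd p) \<le> \<nu> (fst p) \<and> \<nu> (fst p) > 0}"
    by (auto simp: hypo_def gx split: if_splits)
  obtain z where z: "z \<in> rel_interior (edom \<nu>)" using antinorm_relint[OF A] by blast
  have "\<nu> z > 0" using pos z by blast
  then obtain c where c: "\<nu> z = ereal c" "c > 0" using fin by (cases "\<nu> z") auto
  have "closure (hypo g) = hypo \<nu>"
  proof
    show "closure (hypo g) \<subseteq> hypo \<nu>"
      by (rule closure_minimal[OF _ cl]) (auto simp: gx split: if_splits)
  next
    show "hypo \<nu> \<subseteq> closure (hypo g)"
    proof
      fix p assume p: "p \<in> hypo \<nu>"
      obtain x t where pxt: "p = (x, t)" by force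
      have xe: "x \<in> edom \<nu>" using p pxt by (auto simp: edom_def)
      define w where "w = p - (z, c)"
      show "p \<in> closure (hypo g)" unfolding closure_approachable
      proof (intro allI impI)
        fix e :: real assume e: "e > 0"
        define s where "s = min 1 (e / (2 * (norm w + 1)))"
        have "2 * (norm w + 1) > 0" by (simp add: add_nonneg_pos)
        hence "e / (2 * (norm w + 1)) > 0" using e by (intro divide_pos_pos)
        hence s0: "s > 0" "s \<le> 1" by (auto simp: s_def)
        have "s * norm w < e"
        proof -
          have "s * norm w \<le> (e / (2 * (norm w + 1))) * norm w"
            by (intro mult_right_mono) (auto simp: s_def)
          also have "\<dots> < e"
          proof -
            have N: "norm w \<ge> 0" by simp
            have aux: "\<And>a::real. 0 \<le> a \<Longrightarrow> a < 2 * (a + 1)" by (simp add: algebra_simps)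
            have "norm w < 2 * (norm w + 1)" using N by (rule aux)
            hence "e * norm w < e * (2 * (norm w + 1))" using e by (rule mult_strict_left_mono)
            have P: "2 * (norm w + 1) > 0" by (simp add: add_nonneg_pos)
            have "e / (2 * (norm w + 1)) * norm w = (e * norm w) / (2 * (norm w + 1))" by simp
            also have "\<dots> < e" using pos_divide_less_eq[OF P] \<open>e * norm w < e * (2 * (norm w + 1))\<close> by simp
            finally show ?thesis .
          qed
          finally show ?thesis .
        qed
        have q: "p - s *\<^sub>R w \<in> hypo \<nu>"
        proof -
          have "(1 - s) *\<^sub>R p + s *\<^sub>R (z, c) \<in> hypo \<nu>"
            using s0 p c by (intro convexD[OF cv]) auto
          moreover have "(1 - s) *\<^sub>R p + s *\<^sub>R (z, c) = p - s *\<^sub>R w"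
            by (simp add: w_def algebra_simps)
          ultimately show ?thesis by simp
        qed
        have "x - s *\<^sub>R (x - z) \<in> rel_interior (edom \<nu>)"
          using antinorm_relint(1)[OF A] z xe s0 closure_subset
          by (intro rel_interior_closure_convex_shrink) auto
        hence "\<nu> (fst (p - s *\<^sub>R w)) > 0" using pos by (simp add: pxt w_def)
        hence "p - s *\<^sub>R w \<in> hypo g" using q
          by (cases "p - s *\<^sub>R w") (simp add: Hg)
        moreover have "dist (p - s *\<^sub>R w) p < e"
          using \<open>s * norm w < e\<close> s0 by (simp add: dist_norm)
        ultimately show "\<exists>y\<in>hypo g. dist y p < e" by blast
      qed
    qed
  qed
  hence "hypo (ecl g) = hypo \<nu>" by (simp add: hypo_ecl)
  hence "ecl g = \<nu>" by (rule fun_eq_by_hypo)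
  thus ?thesis by (simp add: nu_of_def g_def)
qed


context
  fixes U :: "'a::euclidean_space set"
  assumes Une: "U \<noteq> {}" and Ucl: "closed U" and Ucv: "convex U"
    and Usc: "\<forall>l\<ge>1. (\<lambda>u. l *\<^sub>R u) ` U \<subseteq> U" and U0: "0 \<notin> U"
begin

lemma U_scale: "l \<ge> 1 \<Longrightarrow> u \<in> U \<Longrightarrow> l *\<^sub>R u \<in> U"
  using Usc by blast

lemma U_down:
  assumes "0 < l'" "l' \<le> l" "inverse l *\<^sub>R x \<in> U"
  shows "inverse l' *\<^sub>R x \<in> U"
proof -
  have "l / l' \<ge> 1" using assms by simp
  hence A: "(l / l') *\<^sub>R (inverse l *\<^sub>R x) \<in> U" using assms(3) by (rule U_scale)
  have eq: "(l / l') *\<^sub>R (inverse l *\<^sub>R x) = inverse l' *\<^sub>R x"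
    using assms by (simp add: field_simps)
  show ?thesis using A unfolding eq .
qed

definition "dU = infdist 0 U"

lemma dU_pos: "dU > 0"
  unfolding dU_def using Ucl Une U0 by (rule infdist_pos_not_in_closed)

lemma dU_le: "u \<in> U \<Longrightarrow> dU \<le> norm u"
  unfolding dU_def using infdist_le[of u U 0] by simp

lemma U_bound:
  assumes "l > 0" "inverse l *\<^sub>R x \<in> U"
  shows "l * dU \<le> norm x"
proof -
  have "dU \<le> norm (inverse l *\<^sub>R x)" using dU_le assms by blast
  hence "dU \<le> norm x / l" using assms by (simp add: divide_inverse mult.commute)
  thus ?thesis using assms by (simp add: field_simps)
qed

lemma nr_def': "nu_ring U x = Sup {ereal l | l. l > 0 \<and> inverse l *\<^sub>R x \<in> U}"
  unfolding nu_ring_def by (rule arg_cong[where f=Sup]) (auto simp: mem_scaled_iff)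

lemma nr_le: "nu_ring U x \<le> ereal (norm x / dU)"
  unfolding nr_def'
proof (rule Sup_least, clarify)
  fix l assume "0 < l" "inverse l *\<^sub>R x \<in> U"
  hence "l * dU \<le> norm x" by (rule U_bound)
  thus "ereal l \<le> ereal (norm x / dU)" using dU_pos by (simp add: field_simps)
qed

lemma nr_key:
  assumes t: "t > 0"
  shows "ereal t \<le> nu_ring U x \<longleftrightarrow> inverse t *\<^sub>R x \<in> U"
proof
  assume "inverse t *\<^sub>R x \<in> U"
  hence "ereal t \<in> {ereal l | l. l > 0 \<and> inverse l *\<^sub>R x \<in> U}" using t by blast
  thus "ereal t \<le> nu_ring U x" unfolding nr_def' by (rule Sup_upper)
next
  assume H: "ereal t \<le> nu_ring U x"
  have sub: "{inverse t<..} \<subseteq> {s. s *\<^sub>R x \<in> U}"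
  proof
    fix s assume "s \<in> {inverse t<..}"
    hence s: "inverse t < s" by simp
    have it: "inverse t > 0" using t by simp
    hence s0: "s > 0" using s by linarith
    have "inverse s < inverse (inverse t)" using s it by (rule less_imp_inverse_less)
    hence "inverse s < t" by simp
    hence "ereal (inverse s) < ereal t" by simp
    hence "ereal (inverse s) < nu_ring U x" using H by (rule less_le_trans)
    hence "\<exists>y\<in>{ereal l | l. l > 0 \<and> inverse l *\<^sub>R x \<in> U}. ereal (inverse s) < y"
      unfolding nr_def' by (simp only: less_Sup_iff)
    then obtain y where y: "y \<in> {ereal l | l. l > 0 \<and> inverse l *\<^sub>R x \<in> U}" "ereal (inverse s) < y" ..
    from y(1) obtain l where l: "y = ereal l" "l > 0" "inverse l *\<^sub>R x \<in> U" by blast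
    have "inverse s < l" using y(2) l(1) by simp
    hence "inverse s \<le> l" by simp
    moreover have "0 < inverse s" using s0 by simp
    ultimately have "inverse (inverse s) *\<^sub>R x \<in> U" using U_down l(3) by blast
    thus "s \<in> {s. s *\<^sub>R x \<in> U}" by simp
  qed
  have "closed ((\<lambda>s::real. s *\<^sub>R x) -` U)"
    by (rule continuous_closed_vimage[OF Ucl]) (intro continuous_intros)
  moreover have "(\<lambda>s::real. s *\<^sub>R x) -` U = {s. s *\<^sub>R x \<in> U}" by auto
  ultimately have "closed {s::real. s *\<^sub>R x \<in> U}" by simp
  hence "closure {inverse t<..} \<subseteq> {s. s *\<^sub>R x \<in> U}" using sub by (rule closure_minimal[rotated])
  thus "inverse t *\<^sub>R x \<in> U" by (auto simp: closure_greaterThan)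
qed

lemma nr_cases:
  "nu_ring U x = -\<infinity> \<or> (\<exists>a>0. nu_ring U x = ereal a \<and> inverse a *\<^sub>R x \<in> U)"
proof (cases "\<exists>l>0. inverse l *\<^sub>R x \<in> U")
  case False
  have E: "{ereal l | l. l > 0 \<and> inverse l *\<^sub>R x \<in> U} = {}" using False by auto
  show ?thesis unfolding nr_def' E by (simp add: bot_ereal_def)
next
  case True
  then obtain l where l: "l > 0" "inverse l *\<^sub>R x \<in> U" by blast
  have "ereal l \<le> nu_ring U x" using l nr_key by blast
  moreover have "nu_ring U x \<le> ereal (norm x / dU)" by (rule nr_le)
  ultimately obtain a where a: "nu_ring U x = ereal a" "l \<le> a"
    by (cases "nu_ring U x") auto
  have "inverse a *\<^sub>R x \<in> U" using nr_key[of a x] a l by simp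
  thus ?thesis using a l by auto
qed

lemma nr_pos: "nu_ring U x \<noteq> -\<infinity> \<Longrightarrow> nu_ring U x > 0"
  using nr_cases[of x] by auto

lemma nr_cone: "nu_ring U x \<noteq> -\<infinity> \<longleftrightarrow> (\<exists>a>0. inverse a *\<^sub>R x \<in> U)"
proof
  assume "nu_ring U x \<noteq> -\<infinity>" thus "\<exists>a>0. inverse a *\<^sub>R x \<in> U" using nr_cases[of x] by auto
next
  assume "\<exists>a>0. inverse a *\<^sub>R x \<in> U"
  then obtain a where "a > 0" "inverse a *\<^sub>R x \<in> U" by blast
  hence "ereal a \<le> nu_ring U x" using nr_key by blast
  thus "nu_ring U x \<noteq> -\<infinity>" by auto
qed

lemma hypo_nr_scale:
  assumes l: "l > 0" and p: "(x, t) \<in> hypo (nu_ring U)"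
  shows "(l *\<^sub>R x, l * t) \<in> hypo (nu_ring U)"
proof (cases "t > 0")
  case True
  have "inverse t *\<^sub>R x \<in> U" using p True nr_key by simp
  moreover have eq: "inverse (l * t) *\<^sub>R (l *\<^sub>R x) = inverse t *\<^sub>R x" using l by simp
  moreover have k: "ereal (l*t) \<le> nu_ring U (l *\<^sub>R x) \<longleftrightarrow> inverse (l*t) *\<^sub>R (l *\<^sub>R x) \<in> U"
    by (rule nr_key) (simp add: l True)
  ultimately show ?thesis unfolding hypo_mem k eq by simp
next
  case False
  have "nu_ring U x \<noteq> -\<infinity>" using p by auto
  then obtain a where a: "a > 0" "inverse a *\<^sub>R x \<in> U" using nr_cone by blast
  have "inverse (l * a) *\<^sub>R (l *\<^sub>R x) = inverse a *\<^sub>R x" using l by simp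
  hence "nu_ring U (l *\<^sub>R x) \<noteq> -\<infinity>" using nr_cone a l by (metis mult_pos_pos)
  hence "nu_ring U (l *\<^sub>R x) > 0" by (rule nr_pos)
  moreover have "l * t \<le> 0" using False l by (simp add: mult_nonneg_nonpos)
  ultimately show ?thesis by (simp add: order.trans[of _ 0] less_imp_le)
qed

lemma hypo_nr_convex: "convex (hypo (nu_ring U))"
  unfolding convex_def
proof (intro ballI allI impI)
  fix p q and u v :: real
  assume p: "p \<in> hypo (nu_ring U)" and q: "q \<in> hypo (nu_ring U)" and uv: "0 \<le> u" "0 \<le> v" "u + v = 1"
  obtain x s where ps: "p = (x, s)" by force
  obtain y t where qs: "q = (y, t)" by force
  have "nu_ring U x \<noteq> -\<infinity>" using p ps by auto
  then obtain a where a: "a > 0" "nu_ring U x = ereal a" "inverse a *\<^sub>R x \<in> U" using nr_cases by blast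
  have "nu_ring U y \<noteq> -\<infinity>" using q qs by auto
  then obtain b where b: "b > 0" "nu_ring U y = ereal b" "inverse b *\<^sub>R y \<in> U" using nr_cases by blast
  have sa: "s \<le> a" using p ps a by simp
  have tb: "t \<le> b" using q qs b by simp
  define c where "c = u * a + v * b"
  have c0: "c > 0"
  proof -
    have "u > 0 \<or> v > 0" using uv by auto
    thus ?thesis using a b uv unfolding c_def by (auto intro: add_pos_nonneg add_nonneg_pos)
  qed
  have "(u * a / c) *\<^sub>R (inverse a *\<^sub>R x) + (v * b / c) *\<^sub>R (inverse b *\<^sub>R y) \<in> U"
    using a b c0 uv by (intro convexD[OF Ucv]) (auto simp: c_def add_divide_distrib[symmetric])
  moreover have "(u * a / c) *\<^sub>R (inverse a *\<^sub>R x) + (v * b / c) *\<^sub>R (inverse b *\<^sub>R y)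
      = inverse c *\<^sub>R (u *\<^sub>R x + v *\<^sub>R y)"
  proof -
    have e1: "u * a / c * inverse a = inverse c * u" using a by (simp add: field_simps)
    have e2: "v * b / c * inverse b = inverse c * v" using b by (simp add: field_simps)
    show ?thesis by (simp only: scaleR_scaleR scaleR_add_right e1 e2)
  qed
  ultimately have "ereal c \<le> nu_ring U (u *\<^sub>R x + v *\<^sub>R y)" using nr_key[OF c0] by simp
  moreover have "u * s + v * t \<le> c"
    unfolding c_def using sa tb uv by (intro add_mono mult_left_mono) auto
  ultimately have "ereal (u * s + v * t) \<le> nu_ring U (u *\<^sub>R x + v *\<^sub>R y)"
    by (metis ereal_less_eq(3) order.trans)
  thus "u *\<^sub>R p + v *\<^sub>R q \<in> hypo (nu_ring U)" using ps qs by simp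
qed


lemma Hc_eq: "hypo (nu_of U) = closure (hypo (nu_ring U))"
  by (simp add: nu_of_def hypo_ecl)

lemma nv_le_iff: "ereal t \<le> nu_of U x \<longleftrightarrow> (x, t) \<in> closure (hypo (nu_ring U))"
  by (rule hypo_mem[of x t "nu_of U", unfolded Hc_eq, symmetric])

lemma Hc_scale:
  assumes l: "l > 0" and p: "p \<in> closure (hypo (nu_ring U))"
  shows "l *\<^sub>R p \<in> closure (hypo (nu_ring U))"
proof -
  have sub: "(*\<^sub>R) l ` hypo (nu_ring U) \<subseteq> hypo (nu_ring U)"
  proof
    fix q assume "q \<in> (*\<^sub>R) l ` hypo (nu_ring U)"
    then obtain x t where "(x, t) \<in> hypo (nu_ring U)" "q = l *\<^sub>R (x, t)" by auto
    thus "q \<in> hypo (nu_ring U)" using hypo_nr_scale[OF l] by simp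
  qed
  have "l *\<^sub>R p \<in> (*\<^sub>R) l ` closure (hypo (nu_ring U))" using p by blast
  also have "\<dots> = closure ((*\<^sub>R) l ` hypo (nu_ring U))" by (rule closure_scaleR)
  also have "\<dots> \<subseteq> closure (hypo (nu_ring U))" using sub by (rule closure_mono)
  finally show ?thesis .
qed

lemma nv_hom_pos:
  assumes l: "l > 0"
  shows "nu_of U (l *\<^sub>R x) = ereal l * nu_of U x"
proof (rule ereal_eq_by_hypo)
  fix t
  have "ereal t \<le> nu_of U (l *\<^sub>R x) \<longleftrightarrow> (l *\<^sub>R x, t) \<in> closure (hypo (nu_ring U))"
    by (rule nv_le_iff)
  also have "\<dots> \<longleftrightarrow> (x, t / l) \<in> closure (hypo (nu_ring U))"
  proof
    assume "(l *\<^sub>R x, t) \<in> closure (hypo (nu_ring U))"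
    hence "inverse l *\<^sub>R (l *\<^sub>R x, t) \<in> closure (hypo (nu_ring U))" using l by (intro Hc_scale) auto
    thus "(x, t / l) \<in> closure (hypo (nu_ring U))" using l by (simp add: divide_inverse mult.commute)
  next
    assume "(x, t / l) \<in> closure (hypo (nu_ring U))"
    hence "l *\<^sub>R (x, t / l) \<in> closure (hypo (nu_ring U))" using l by (intro Hc_scale) auto
    thus "(l *\<^sub>R x, t) \<in> closure (hypo (nu_ring U))" using l by simp
  qed
  also have "\<dots> \<longleftrightarrow> ereal (t / l) \<le> nu_of U x"
    by (rule nv_le_iff[symmetric])
  also have "\<dots> \<longleftrightarrow> ereal t \<le> ereal l * nu_of U x"
    using l by (cases "nu_of U x") (auto simp: field_simps)
  finally show "ereal t \<le> nu_of U (l *\<^sub>R x) \<longleftrightarrow> ereal t \<le> ereal l * nu_of U x" .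
qed

lemma nv_fin: "nu_of U x \<noteq> \<infinity>"
proof
  assume inf: "nu_of U x = \<infinity>"
  define B where "B = {p::'a \<times> real. snd p * dU \<le> norm (fst p)}"
  have cB: "closed B" unfolding B_def
    by (intro closed_Collect_le continuous_intros)
  have "hypo (nu_ring U) \<subseteq> B"
  proof (clarsimp simp: B_def)
    fix y s assume "ereal s \<le> nu_ring U y"
    hence "ereal s \<le> ereal (norm y / dU)" by (rule order.trans[OF _ nr_le])
    thus "s * dU \<le> norm y" using dU_pos by (simp add: field_simps)
  qed
  hence "closure (hypo (nu_ring U)) \<subseteq> B" using cB by (rule closure_minimal)
  moreover have "ereal (norm x / dU + 1) \<le> nu_of U x" using inf by simp
  hence "(x, norm x / dU + 1) \<in> closure (hypo (nu_ring U))" using nv_le_iff by blast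
  ultimately have "(x, norm x / dU + 1) \<in> B" by blast
  hence "(norm x / dU + 1) * dU \<le> norm x" by (simp add: B_def)
  moreover have "(norm x / dU + 1) * dU = norm x + dU" using dU_pos by (simp add: field_simps)
  ultimately show False using dU_pos by linarith
qed

lemma ecl_ge: "g x \<le> ecl g x"
  unfolding ecl_def by (rule INF_greatest, rule SUP_upper) auto

lemma nv_ge: "nu_ring U x \<le> nu_of U x"
  unfolding nu_of_def by (rule ecl_ge)

lemma nv_zero: "nu_of U 0 = 0"
proof -
  obtain u where u: "u \<in> U" using Une by blast
  have "(0, 0) \<in> closure (hypo (nu_ring U))" unfolding closure_approachable
  proof (intro allI impI)
    fix e :: real assume e: "e > 0"
    have N: "norm u + 1 > 0" by (simp add: add_nonneg_pos)
    define s where "s = e / (norm u + 1)"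
    have s: "s > 0" using e N by (simp add: s_def)
    have "inverse s *\<^sub>R (s *\<^sub>R u) \<in> U" using s u by simp
    hence "ereal s \<le> nu_ring U (s *\<^sub>R u)" using nr_key[OF s] by blast
    moreover have "ereal 0 \<le> ereal s" using s by simp
    ultimately have "ereal 0 \<le> nu_ring U (s *\<^sub>R u)" by (rule order.trans[rotated])
    hence "(s *\<^sub>R u, 0) \<in> hypo (nu_ring U)" by (simp only: hypo_mem)
    moreover have "dist (s *\<^sub>R u, 0) (0, 0::real) < e"
    proof -
      have "dist (s *\<^sub>R u, 0) (0, 0::real) \<le> dist (s *\<^sub>R u) 0 + dist (0::real) 0" by (rule dist_pair_le)
      also have "\<dots> = s * norm u" using s by simp
      also have "\<dots> < s * (norm u + 1)" using s by simp
      also have "\<dots> = e" using N by (simp add: s_def)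
      finally show ?thesis .
    qed
    ultimately show "\<exists>y\<in>hypo (nu_ring U). dist y (0, 0) < e" by blast
  qed
  hence ge: "0 \<le> nu_of U 0" using nv_le_iff[of 0 0] by simp
  then obtain r where r: "nu_of U 0 = ereal r" using nv_fin[of 0] by (cases "nu_of U 0") auto
  have "nu_of U ((2::real) *\<^sub>R 0) = ereal 2 * nu_of U 0" by (rule nv_hom_pos) simp
  hence "r = 2 * r" using r by simp
  hence "r = 0" by simp
  thus ?thesis using r by simp
qed

lemma nv_antinorm: "antinorm (nu_of U)"
  unfolding antinorm_def
proof (intro conjI allI impI ballI)
  show "\<And>x. nu_of U x \<noteq> \<infinity>" by (rule nv_fin)
  show "convex (hypo (nu_of U))" unfolding Hc_eq by (rule convex_closure[OF hypo_nr_convex])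
  show "closed (hypo (nu_of U))" unfolding Hc_eq by simp
  show "nu_of U (l *\<^sub>R x) = ereal l * nu_of U x" if "0 \<le> l" for l x
  proof (cases "l = 0")
    case True thus ?thesis by (simp add: nv_zero)
  next
    case False thus ?thesis using that nv_hom_pos by simp
  qed
  have "0 \<in> edom (nu_of U)" using nv_zero by (simp add: edom_def)
  thus "edom (nu_of U) \<noteq> {}" by blast
  define C where "C = edom (nu_ring U)"
  have finr: "\<forall>x. nu_ring U x \<noteq> \<infinity>" proof
    fix x show "nu_ring U x \<noteq> \<infinity>" using nr_le[of x] by auto
  qed
  have cC: "convex C" unfolding C_def edom_eq_fst_hypo[OF finr]
    by (rule convex_linear_image[OF linear_fst hypo_nr_convex])
  have C1: "C \<subseteq> edom (nu_of U)" unfolding C_def edom_def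
  proof (clarify)
    fix x assume "nu_ring U x \<noteq> -\<infinity>" "nu_of U x = -\<infinity>"
    thus False using nv_ge[of x] by auto
  qed
  have C2: "edom (nu_of U) \<subseteq> closure C"
  proof -
    have "edom (nu_of U) = fst ` closure (hypo (nu_ring U))"
      using edom_eq_fst_hypo[of "nu_of U"] nv_fin Hc_eq by simp
    also have "\<dots> \<subseteq> closure (fst ` hypo (nu_ring U))"
      by (rule image_closure_subset[OF _ closed_closure closure_subset]) (intro continuous_intros)
    also have "fst ` hypo (nu_ring U) = C" unfolding C_def edom_eq_fst_hypo[OF finr] ..
    finally show ?thesis .
  qed
  have aff: "affine hull edom (nu_of U) = affine hull closure C"
  proof
    show "affine hull edom (nu_of U) \<subseteq> affine hull closure C" using C2 by (rule hull_mono)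
    have "affine hull closure C = affine hull C" by (rule closure_same_affine_hull)
    also have "\<dots> \<subseteq> affine hull edom (nu_of U)" using C1 by (rule hull_mono)
    finally show "affine hull closure C \<subseteq> affine hull edom (nu_of U)" .
  qed
  fix x assume x: "x \<in> rel_interior (edom (nu_of U))"
  have "rel_interior (edom (nu_of U)) \<subseteq> rel_interior (closure C)"
    using C2 aff by (rule subset_rel_interior)
  also have "\<dots> = rel_interior C" using cC by (rule convex_rel_interior_closure)
  also have "\<dots> \<subseteq> C" by (rule rel_interior_subset)
  finally have "x \<in> C" using x by blast
  hence "nu_ring U x > 0" using nr_pos by (simp add: C_def edom_def)
  thus "nu_of U x > 0" using nv_ge[of x] by (rule less_le_trans)
qed

lemma nv_U: "U_of (nu_of U) = U"
proof
  show "U \<subseteq> U_of (nu_of U)"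
  proof
    fix x assume "x \<in> U"
    hence "ereal 1 \<le> nu_ring U x" using nr_key[of 1 x] by simp
    thus "x \<in> U_of (nu_of U)" using nv_ge[of x] by (auto simp: U_of_def intro: order.trans)
  qed
next
  show "U_of (nu_of U) \<subseteq> U"
  proof
    fix x assume "x \<in> U_of (nu_of U)"
    hence x1: "(x, 1) \<in> closure (hypo (nu_ring U))" using nv_le_iff[of 1 x] by (simp add: U_of_def)
    define Op where "Op = {p::'a \<times> real. 1/2 < snd p}"
    define A where "A = {p::'a \<times> real. 1/2 \<le> snd p} \<inter> (\<lambda>p. inverse (snd p) *\<^sub>R fst p) -` U"
    have oO: "open Op" unfolding Op_def by (intro open_Collect_less continuous_intros)
    have cA: "closed A" unfolding A_def
    proof (rule continuous_closed_preimage)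
      show "continuous_on {p::'a \<times> real. 1/2 \<le> snd p} (\<lambda>p. inverse (snd p) *\<^sub>R fst p)"
        by (intro continuous_intros) auto
      show "closed {p::'a \<times> real. 1/2 \<le> snd p}" by (intro closed_Collect_le continuous_intros)
    qed (rule Ucl)
    have "Op \<inter> hypo (nu_ring U) \<subseteq> A"
    proof
      fix p assume "p \<in> Op \<inter> hypo (nu_ring U)"
      then obtain y s where p: "p = (y, s)" "1/2 < s" "ereal s \<le> nu_ring U y"
        by (cases p) (auto simp: Op_def)
      hence "inverse s *\<^sub>R y \<in> U" using nr_key[of s y] by simp
      thus "p \<in> A" using p by (simp add: A_def)
    qed
    hence "closure (Op \<inter> hypo (nu_ring U)) \<subseteq> A" using cA by (rule closure_minimal)
    moreover have "(x, 1) \<in> Op \<inter> closure (hypo (nu_ring U))" using x1 by (simp add: Op_def)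
    ultimately have "(x, 1) \<in> A" using open_Int_closure_subset[OF oO] by blast
    thus "x \<in> U" by (simp add: A_def)
  qed
qed

end

theorem lemma1:
  fixes dummy :: "real ^ 'n"
  shows
   "(\<forall>\<nu> :: real ^ 'n \<Rightarrow> ereal. antinorm \<nu> \<longrightarrow>
        U_of \<nu> \<noteq> {} \<and> closed (U_of \<nu>) \<and> convex (U_of \<nu>) \<and>
        (\<forall>l\<ge>1. (\<lambda>u. l *\<^sub>R u) ` U_of \<nu> \<subseteq> U_of \<nu>) \<and> 0 \<notin> U_of \<nu>)
    \<and> (\<forall>U :: (real ^ 'n) set.
        U \<noteq> {} \<and> closed U \<and> convex U \<and> (\<forall>l\<ge>1. (\<lambda>u. l *\<^sub>R u) ` U \<subseteq> U) \<and> 0 \<notin> U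
        \<longrightarrow> antinorm (nu_of U) \<and> U_of (nu_of U) = U)
    \<and> (\<forall>\<nu> :: real ^ 'n \<Rightarrow> ereal. antinorm \<nu> \<longrightarrow> nu_of (U_of \<nu>) = \<nu>)"
proof (intro conjI)
  show "\<forall>\<nu> :: real ^ 'n \<Rightarrow> ereal. antinorm \<nu> \<longrightarrow>
        U_of \<nu> \<noteq> {} \<and> closed (U_of \<nu>) \<and> convex (U_of \<nu>) \<and>
        (\<forall>l\<ge>1. (\<lambda>u. l *\<^sub>R u) ` U_of \<nu> \<subseteq> U_of \<nu>) \<and> 0 \<notin> U_of \<nu>"
    using part1 by blast
  show "\<forall>U :: (real ^ 'n) set.
        U \<noteq> {} \<and> closed U \<and> convex U \<and> (\<forall>l\<ge>1. (\<lambda>u. l *\<^sub>R u) ` U \<subseteq> U) \<and> 0 \<notin> U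
        \<longrightarrow> antinorm (nu_of U) \<and> U_of (nu_of U) = U"
  proof (intro allI impI)
    fix U :: "(real ^ 'n) set"
    assume H: "U \<noteq> {} \<and> closed U \<and> convex U \<and> (\<forall>l\<ge>1. (\<lambda>u. l *\<^sub>R u) ` U \<subseteq> U) \<and> 0 \<notin> U"
    from H have h1: "U \<noteq> {}" and h2: "closed U" and h3: "convex U"
      and h4: "\<forall>l\<ge>1. (\<lambda>u. l *\<^sub>R u) ` U \<subseteq> U" and h5: "0 \<notin> U" by simp_all
    show "antinorm (nu_of U) \<and> U_of (nu_of U) = U"
      by (rule conjI[OF nv_antinorm[OF h1 h2 h3 h4 h5] nv_U[OF h1 h2 h3 h4 h5]])
  qed
  show "\<forall>\<nu> :: real ^ 'n \<Rightarrow> ereal. antinorm \<nu> \<longrightarrow> nu_of (U_of \<nu>) = \<nu>"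
    using part3 by blast
qed

end
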